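(* Let $H\in(\tfrac12,1)$, $\sigma>0$. Then $\bar{\mathcal{Y}}_n^H\to0$ in $L^2$ as $n\to\infty$.
   Context: $c_H=\sqrt{\frac{2H\,\Gamma(\frac32-H)}{\Gamma(H+\frac12)\Gamma(2-2H)}}$, $C_H=c_H(H-\frac12)$, and for integers $1\le i<n$, $j_n^H(i)=\sigma C_H\int_{i-1}^i x^{\frac12-H}\Big(\int_0^1(v+n-1)^{H-\frac12}(v+n-1-x)^{H-\frac32}dv\Big)dx$. For $n\ge2$ let $x_n=n-1-\Big(\big(1+\frac1{n-1}\big)^{\frac2{3-2H}}-1\Big)^{-1}\in(0,n-1)$ and $i_n=\lfloor x_n\rfloor+1$. Let $(\xi_i)_{i\ge1}$ be i.i.d. with $P(\xi_i=\pm1)=\frac12$ and $\bar{\mathcal{Y}}_n^H=\sum_{i=1}^{i_n-1}j_n^H(i)\xi_i$. *)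

theory Defs
  imports "HOL-Probability.Probability"
begin

definition c_H :: "real \<Rightarrow> real" where
  "c_H H = sqrt (2 * H * Gamma (3/2 - H) / (Gamma (H + 1/2) * Gamma (2 - 2 * H)))"

definition C_H :: "real \<Rightarrow> real" where
  "C_H H = c_H H * (H - 1/2)"

definition jnH :: "real \<Rightarrow> real \<Rightarrow> nat \<Rightarrow> nat \<Rightarrow> real" where
  "jnH \<sigma> H n i = \<sigma> * C_H H *
     (LBINT x=real i - 1..real i. x powr (1/2 - H) *
        (LBINT v=0..1. (v + real n - 1) powr (H - 1/2) * (v + real n - 1 - x) powr (H - 3/2)))"

definition x_seq :: "real \<Rightarrow> nat \<Rightarrow> real" where
  "x_seq H n = real n - 1 - inverse ((1 + 1 / (real n - 1)) powr (2 / (3 - 2 * H)) - 1)"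

definition i_seq :: "real \<Rightarrow> nat \<Rightarrow> nat" where
  "i_seq H n = nat \<lfloor>x_seq H n\<rfloor> + 1"

definition Ybar :: "real \<Rightarrow> real \<Rightarrow> (nat \<Rightarrow> 'a \<Rightarrow> real) \<Rightarrow> nat \<Rightarrow> 'a \<Rightarrow> real" where
  "Ybar \<sigma> H \<xi> n \<omega> = (\<Sum>i = 1..i_seq H n - 1. jnH \<sigma> H n i * \<xi> i \<omega>)"

end

theory Submission imports Defs begin

lemma (in prob_space) pm1_AE:
  fixes X :: "'a \<Rightarrow> real"
  assumes meas[measurable]: "X \<in> borel_measurable M"
    and p1: "\<P>(\<omega> in M. X \<omega> = 1) = 1/2" and pm: "\<P>(\<omega> in M. X \<omega> = -1) = 1/2"
  shows "AE \<omega> in M. X \<omega> = 1 \<or> X \<omega> = -1"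
proof -
  have "{\<omega>\<in>space M. X \<omega> = 1 \<or> X \<omega> = -1} = {\<omega>\<in>space M. X \<omega> = 1} \<union> {\<omega>\<in>space M. X \<omega> = -1}" by auto
  hence "\<P>(\<omega> in M. X \<omega> = 1 \<or> X \<omega> = -1) = \<P>(\<omega> in M. X \<omega> = 1) + \<P>(\<omega> in M. X \<omega> = -1)"
    by (simp only:) (rule finite_measure_Union, auto)
  hence "\<P>(\<omega> in M. X \<omega> = 1 \<or> X \<omega> = -1) = 1" using p1 pm by simp
  thus ?thesis by (subst (asm) prob_Collect_eq_1) auto
qed

lemma (in prob_space) pm1_integrable:
  fixes X :: "'a \<Rightarrow> real"
  assumes "X \<in> borel_measurable M" "AE \<omega> in M. X \<omega> = 1 \<or> X \<omega> = -1"
  shows "integrable M X"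
  by (rule integrable_const_bound[where B=1]) (use assms in auto)

lemma (in prob_space) pm1_mean:
  fixes X :: "'a \<Rightarrow> real"
  assumes meas[measurable]: "X \<in> borel_measurable M"
    and p1: "\<P>(\<omega> in M. X \<omega> = 1) = 1/2" and pm: "\<P>(\<omega> in M. X \<omega> = -1) = 1/2"
  shows "expectation X = 0"
proof -
  have ae: "AE \<omega> in M. X \<omega> = 1 \<or> X \<omega> = -1" by (rule pm1_AE[OF assms])
  have "expectation X = expectation (\<lambda>\<omega>. indicator {\<omega>\<in>space M. X \<omega> = 1} \<omega> - indicator {\<omega>\<in>space M. X \<omega> = -1} \<omega>)"
    by (rule integral_cong_AE) (use ae in \<open>auto simp: indicator_def\<close>)
  also have "\<dots> = prob {\<omega>\<in>space M. X \<omega> = 1} - prob {\<omega>\<in>space M. X \<omega> = -1}"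
    by (subst Bochner_Integration.integral_diff) (auto intro!: integrable_real_indicator simp: Int_absorb2 less_top[symmetric])
  finally show ?thesis using p1 pm by simp
qed

lemma (in prob_space) pm1_sq:
  fixes X :: "'a \<Rightarrow> real"
  assumes meas[measurable]: "X \<in> borel_measurable M"
    and ae: "AE \<omega> in M. X \<omega> = 1 \<or> X \<omega> = -1"
  shows "expectation (\<lambda>\<omega>. X \<omega> * X \<omega>) = 1"
proof -
  have "expectation (\<lambda>\<omega>. X \<omega> * X \<omega>) = expectation (\<lambda>\<omega>. 1)"
    by (rule integral_cong_AE) (use ae in auto)
  thus ?thesis by (simp add: prob_space)
qed

lemma (in prob_space) expect_sq_sum:
  fixes \<xi> :: "nat \<Rightarrow> 'a \<Rightarrow> real"
  assumes indep: "indep_vars (\<lambda>_. borel) \<xi> {1..}"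
    and meas: "\<And>i. i \<ge> 1 \<Longrightarrow> \<xi> i \<in> borel_measurable M"
    and p1: "\<And>i. i \<ge> 1 \<Longrightarrow> \<P>(\<omega> in M. \<xi> i \<omega> = 1) = 1/2"
    and pm: "\<And>i. i \<ge> 1 \<Longrightarrow> \<P>(\<omega> in M. \<xi> i \<omega> = -1) = 1/2"
  shows "expectation (\<lambda>\<omega>. (\<Sum>i=1..m. a i * \<xi> i \<omega>)\<^sup>2) = (\<Sum>i=1..m. (a i)\<^sup>2)"
proof -
  have ae: "\<And>i. i \<ge> 1 \<Longrightarrow> AE \<omega> in M. \<xi> i \<omega> = 1 \<or> \<xi> i \<omega> = -1"
    using pm1_AE meas p1 pm by blast
  have int: "\<And>i. i \<ge> 1 \<Longrightarrow> integrable M (\<xi> i)" using pm1_integrable meas ae by blast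
  have intp: "integrable M (\<lambda>\<omega>. \<xi> i \<omega> * \<xi> k \<omega>)" if "i \<ge> 1" "k \<ge> 1" for i k
  proof (rule integrable_const_bound[where B=1])
    show "AE x in M. norm (\<xi> i x * \<xi> k x) \<le> 1" using ae[OF that(1)] ae[OF that(2)] by eventually_elim auto
  qed (use meas that in auto)
  have E: "expectation (\<lambda>\<omega>. \<xi> i \<omega> * \<xi> k \<omega>) = (if i = k then 1 else 0)" if "i \<ge> 1" "k \<ge> 1" for i k
  proof (cases "i = k")
    case True thus ?thesis using pm1_sq meas ae that by simp
  next
    case False
    have ind: "indep_vars (\<lambda>_. borel) \<xi> {i, k}"
      by (rule indep_vars_subset[OF indep]) (use that in auto)
    have "expectation (\<lambda>\<omega>. \<Prod>j\<in>{i,k}. \<xi> j \<omega>) = (\<Prod>j\<in>{i,k}. expectation (\<xi> j))"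
      by (rule indep_vars_lebesgue_integral[OF _ ind]) (use int that in auto)
    thus ?thesis using False pm1_mean[OF meas p1 pm] that by simp
  qed
  have "(\<lambda>\<omega>. (\<Sum>i=1..m. a i * \<xi> i \<omega>)\<^sup>2) = (\<lambda>\<omega>. \<Sum>i=1..m. \<Sum>k=1..m. a i * a k * (\<xi> i \<omega> * \<xi> k \<omega>))"
    by (auto simp: power2_eq_square sum_product mult_ac)
  hence "expectation (\<lambda>\<omega>. (\<Sum>i=1..m. a i * \<xi> i \<omega>)\<^sup>2) = (\<Sum>i=1..m. expectation (\<lambda>\<omega>. \<Sum>k=1..m. a i * a k * (\<xi> i \<omega> * \<xi> k \<omega>)))"
    using intp by (simp only:) (rule Bochner_Integration.integral_sum, auto intro!: integrable_sum)
  also have "\<dots> = (\<Sum>i=1..m. \<Sum>k=1..m. expectation (\<lambda>\<omega>. a i * a k * (\<xi> i \<omega> * \<xi> k \<omega>)))"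
    using intp by (intro sum.cong refl Bochner_Integration.integral_sum) auto
  also have "\<dots> = (\<Sum>i=1..m. \<Sum>k=1..m. a i * a k * expectation (\<lambda>\<omega>. \<xi> i \<omega> * \<xi> k \<omega>))"
    by (intro sum.cong refl Bochner_Integration.integral_mult_right_zero)
  also have "\<dots> = (\<Sum>i=1..m. \<Sum>k=1..m. a i * a k * (if i = k then 1 else 0))"
    using E by (intro sum.cong refl) auto
  also have "\<dots> = (\<Sum>i=1..m. (a i)\<^sup>2)"
    by (simp add: power2_eq_square if_distrib cong: if_cong)
  finally show ?thesis .
qed

lemma LBINT_abs_le_const:
  fixes f :: "real \<Rightarrow> real"
  assumes ab: "a \<le> b" and bnd: "\<And>x. x \<in> {a..b} \<Longrightarrow> \<bar>f x\<bar> \<le> B"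
  shows "\<bar>LBINT x=a..b. f x\<bar> \<le> B * (b - a)"
proof -
  have B0: "0 \<le> B" using bnd[of a] ab by force
  have eq: "(LBINT x=a..b. f x) = integral\<^sup>L lborel (\<lambda>x. indicator {a..b} x *\<^sub>R f x)"
    using ab by (simp add: interval_integral_Icc set_lebesgue_integral_def)
  show ?thesis
  proof (cases "integrable lborel (\<lambda>x. indicator {a..b} x *\<^sub>R f x)")
    case True
    have "norm (integral\<^sup>L lborel (\<lambda>x. indicator {a..b} x *\<^sub>R f x)) \<le> integral\<^sup>L lborel (\<lambda>x. indicator {a..b} x * B)"
    proof (rule Bochner_Integration.integral_norm_bound_integral[OF True])
      have "integrable lborel (\<lambda>x. indicat_real {a..b} x)"
        by (rule integrable_real_indicator) (auto simp: emeasure_lborel_Icc_eq)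
      thus "integrable lborel (\<lambda>x. indicator {a..b} x * B)" by (rule integrable_mult_left)
    qed (auto simp: indicator_def bnd)
    also have "\<dots> = B * (b - a)" using ab by (simp add: mult.commute)
    finally show ?thesis using eq by simp
  next
    case False
    thus ?thesis using eq B0 ab by (simp add: not_integrable_integral_eq)
  qed
qed

lemma LBINT_abs_le_weight:
  fixes f w :: "real \<Rightarrow> real"
  assumes ab: "a \<le> b" and wi: "set_integrable lborel {a..b} w"
    and bnd: "\<And>x. x \<in> {a..b} \<Longrightarrow> \<bar>f x\<bar> \<le> B * w x" and B0: "0 \<le> B"
  shows "\<bar>LBINT x=a..b. f x\<bar> \<le> B * (LBINT x=a..b. w x)"
proof -
  have eq: "(LBINT x=a..b. f x) = integral\<^sup>L lborel (\<lambda>x. indicator {a..b} x *\<^sub>R f x)"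
    using ab by (simp add: interval_integral_Icc set_lebesgue_integral_def)
  have eqw: "(LBINT x=a..b. w x) = integral\<^sup>L lborel (\<lambda>x. indicator {a..b} x *\<^sub>R w x)"
    using ab by (simp add: interval_integral_Icc set_lebesgue_integral_def)
  have wnn: "0 \<le> B * (LBINT x=a..b. w x)"
  proof -
    have "0 \<le> integral\<^sup>L lborel (\<lambda>x. indicator {a..b} x *\<^sub>R (B * w x))"
      by (rule integral_nonneg_AE, rule AE_I2) (auto simp: indicator_def intro: order_trans[OF abs_ge_zero bnd])
    also have "\<dots> = B * integral\<^sup>L lborel (\<lambda>x. indicator {a..b} x *\<^sub>R w x)"
      by (simp add: mult_ac)
    finally show ?thesis using eqw by simp
  qed
  show ?thesis
  proof (cases "integrable lborel (\<lambda>x. indicator {a..b} x *\<^sub>R f x)")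
    case True
    have "norm (integral\<^sup>L lborel (\<lambda>x. indicator {a..b} x *\<^sub>R f x)) \<le> integral\<^sup>L lborel (\<lambda>x. indicator {a..b} x *\<^sub>R (B * w x))"
      by (rule Bochner_Integration.integral_norm_bound_integral[OF True])
         (use integrable_mult_right[OF wi[unfolded set_integrable_def], of B] in \<open>auto simp: indicator_def bnd mult_ac\<close>)
    also have "\<dots> = B * integral\<^sup>L lborel (\<lambda>x. indicator {a..b} x *\<^sub>R w x)"
      by (simp add: mult_ac)
    finally show ?thesis using eq eqw by simp
  next
    case False
    thus ?thesis using eq wnn by (simp add: not_integrable_integral_eq)
  qed
qed

lemma powr_set_integrable:
  assumes "e > (-1::real)"
  shows "set_integrable lborel {0..1} (\<lambda>x::real. x powr e)"
proof -
  have "(\<lambda>t::real. t powr e) integrable_on {0..1}"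
    by (rule integrable_on_powr_from_0) (use assms in auto)
  hence "(\<lambda>t::real. t powr e) absolutely_integrable_on {0..1}"
    by (subst absolutely_integrable_on_iff_nonneg) auto
  thus ?thesis unfolding set_integrable_def
    by (subst (asm) integrable_completion) auto
qed

lemma powr_step:
  fixes g y :: real
  assumes g: "0 < g" "g < 1" and y: "0 \<le> y"
  shows "g * (y + 1) powr (g - 1) \<le> (y + 1) powr g - y powr g"
proof (cases "y = 0")
  case True thus ?thesis using g by simp
next
  case False
  hence yp: "0 < y" using y by simp
  have "\<exists>z. y < z \<and> z < y + 1 \<and> ((y+1) powr g - y powr g = ((y+1) - y) * (g * z powr (g - 1)))"
    by (rule MVT2) (use yp in \<open>auto intro!: has_real_derivative_powr\<close>)
  then obtain z where z: "y < z" "z < y + 1" "(y+1) powr g - y powr g = g * z powr (g - 1)" by auto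
  have "(y + 1) powr (g - 1) \<le> z powr (g - 1)"
    by (rule powr_mono2') (use z yp g in auto)
  thus ?thesis using z g by simp
qed

lemma sum_powr_bound:
  fixes g :: real
  assumes g: "0 < g" "g < 1"
  shows "(\<Sum>i\<in>{2..k+1}. (real i - 1) powr (g - 1)) \<le> real k powr g / g"
proof (induction k)
  case 0 thus ?case by simp
next
  case (Suc k)
  have "{2..Suc k + 1} = insert (k+2) {2..k+1}" by auto
  hence "(\<Sum>i\<in>{2..Suc k+1}. (real i - 1) powr (g - 1)) = (real k + 1) powr (g - 1) + (\<Sum>i\<in>{2..k+1}. (real i - 1) powr (g - 1))"
    by (simp add: add_ac)
  also have "\<dots> \<le> (real k + 1) powr (g - 1) + real k powr g / g" using Suc by simp
  also have "\<dots> \<le> real (Suc k) powr g / g"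
  proof -
    have "(real k + 1) powr (g - 1) \<le> ((real k + 1) powr g - real k powr g) / g"
      using powr_step[OF g, of "real k"] g by (simp add: pos_le_divide_eq mult.commute)
    thus ?thesis by (simp add: diff_divide_distrib add_ac)
  qed
  finally show ?case .
qed


lemma x_seq_bound:
  assumes H: "1/2 < H" "H < 1" and n: "n \<ge> 2"
  shows "x_seq H n \<le> 2/3 * (real n - 1)"
proof -
  define t where "t = 1 / (real n - 1)"
  define a where "a = 2 / (3 - 2 * H)"
  have t: "0 < t" "t \<le> 1" using n by (auto simp: t_def)
  have a: "0 < a" "a \<le> 2" using H by (auto simp: a_def field_simps)
  have p1: "1 < (1 + t) powr a" using powr_less_mono[of 0 a "1+t"] t a by simp
  have "(1 + t) powr a \<le> (1 + t) powr 2" by (rule powr_mono) (use t a in auto)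
  also have "\<dots> = 1 + 2*t + t*t" using t by (simp add: power2_eq_square algebra_simps)
  also have "\<dots> \<le> 1 + 3 * t" using t by (simp add: mult_left_le)
  finally have p2: "(1 + t) powr a - 1 \<le> 3 * t" by simp
  have "inverse (3 * t) \<le> inverse ((1 + t) powr a - 1)"
    by (rule le_imp_inverse_le) (use p1 p2 in auto)
  moreover have "inverse (3 * t) = (real n - 1) / 3" using n by (simp add: t_def)
  ultimately show ?thesis unfolding x_seq_def by (simp add: t_def a_def)
qed

lemma i_le_x:
  assumes "i \<in> {1..i_seq H n - 1}"
  shows "real i \<le> x_seq H n"
proof -
  have "i \<le> nat \<lfloor>x_seq H n\<rfloor>" using assms by (simp add: i_seq_def)
  moreover have "1 \<le> i" using assms by simp
  ultimately have "int i \<le> \<lfloor>x_seq H n\<rfloor>"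
    by (cases "\<lfloor>x_seq H n\<rfloor> \<ge> 0") (auto simp: le_nat_iff)
  thus ?thesis using le_floor_iff[of "int i" "x_seq H n"] by simp
qed

definition Bn :: "real \<Rightarrow> nat \<Rightarrow> real" where
  "Bn H n = 6 powr (3/2 - H) * real n powr (2*H - 2)"

lemma inner_bound:
  assumes H: "1/2 < H" "H < 1" and n: "n \<ge> 2" and x: "0 \<le> x" "x \<le> 2/3 * (real n - 1)"
  shows "\<bar>LBINT v=0..1. (v + real n - 1) powr (H - 1/2) * (v + real n - 1 - x) powr (H - 3/2)\<bar> \<le> Bn H n"
proof -
  have "\<bar>LBINT v=0..1. (v + real n - 1) powr (H - 1/2) * (v + real n - 1 - x) powr (H - 3/2)\<bar>
      \<le> (real n powr (H - 1/2) * (real n / 6) powr (H - 3/2)) * (1 - 0)"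
  proof (rule LBINT_abs_le_const[of 0 1, simplified zero_ereal_def[symmetric] one_ereal_def[symmetric]])
    fix v :: real assume v: "v \<in> {0..1}"
    have nn: "real n \<ge> 2" using n by simp
    have l1: "real n / 6 \<le> v + real n - 1 - x" using v x nn by auto
    have "(v + real n - 1) powr (H - 1/2) \<le> real n powr (H - 1/2)"
      by (rule powr_mono2) (use v nn H in auto)
    moreover have "(v + real n - 1 - x) powr (H - 3/2) \<le> (real n / 6) powr (H - 3/2)"
      by (rule powr_mono2') (use l1 nn H in auto)
    ultimately have "(v + real n - 1) powr (H - 1/2) * (v + real n - 1 - x) powr (H - 3/2)
        \<le> real n powr (H - 1/2) * (real n / 6) powr (H - 3/2)"
      by (intro mult_mono) auto
    thus "\<bar>(v + real n - 1) powr (H - 1/2) * (v + real n - 1 - x) powr (H - 3/2)\<bar>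
        \<le> real n powr (H - 1/2) * (real n / 6) powr (H - 3/2)" by simp
  qed simp
  also have "real n powr (H - 1/2) * (real n / 6) powr (H - 3/2) = Bn H n"
  proof -
    have "real n powr (H - 1/2) * (real n / 6) powr (H - 3/2)
        = real n powr (H - 1/2) * real n powr (H - 3/2) / 6 powr (H - 3/2)"
      by (simp add: powr_divide)
    also have "\<dots> = real n powr (2*H - 2) * 6 powr (3/2 - H)"
    proof -
      have "real n powr (2*H - 2) = real n powr ((H - 1/2) + (H - 3/2))" by (simp add: algebra_simps)
      hence a: "real n powr (H - 1/2) * real n powr (H - 3/2) = real n powr (2*H - 2)"
        by (simp only: powr_add)
      have b: "1 / 6 powr (H - 3/2) = (6::real) powr (3/2 - H)"
        using powr_minus_divide[of 6 "H - 3/2"] by simp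
      show ?thesis using a b by (metis times_divide_eq_right mult.right_neutral)
    qed
    finally show ?thesis by (simp add: Bn_def mult.commute)
  qed
  finally show ?thesis by simp
qed

definition eH :: "real \<Rightarrow> nat \<Rightarrow> real" where
  "eH H i = (if i = 1 then (LBINT x=0..1. x powr (1/2 - H)) else (real i - 1) powr (1/2 - H))"

lemma j_bound:
  assumes H: "1/2 < H" "H < 1" and n: "n \<ge> 2" and i: "i \<ge> 1" "real i \<le> 2/3 * (real n - 1)"
  shows "\<bar>jnH \<sigma> H n i\<bar> \<le> \<bar>\<sigma> * C_H H\<bar> * Bn H n * eH H i"
proof -
  define g where "g x = (LBINT v=0..1. (v + real n - 1) powr (H - 1/2) * (v + real n - 1 - x) powr (H - 3/2))" for x
  have gb: "\<bar>g x\<bar> \<le> Bn H n" if "0 \<le> x" "x \<le> real i" for x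
    unfolding g_def by (rule inner_bound) (use that H n i in auto)
  have B0: "0 \<le> Bn H n" by (simp add: Bn_def)
  have J: "jnH \<sigma> H n i = \<sigma> * C_H H * (LBINT x=real i - 1..real i. x powr (1/2 - H) * g x)"
    by (simp add: jnH_def g_def)
  have "\<bar>LBINT x=real i - 1..real i. x powr (1/2 - H) * g x\<bar> \<le> Bn H n * eH H i"
  proof (cases "i = 1")
    case True
    have "\<bar>LBINT x=0..1. x powr (1/2 - H) * g x\<bar> \<le> Bn H n * (LBINT x=0..1. x powr (1/2 - H))"
    proof (rule LBINT_abs_le_weight[of 0 1, simplified zero_ereal_def[symmetric] one_ereal_def[symmetric]])
      show "set_integrable lborel {0..1} (\<lambda>x::real. x powr (1 / 2 - H))"
        by (rule powr_set_integrable) (use H in auto)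
      fix x :: real assume x: "x \<in> {0..1}"
      have "\<bar>x powr (1/2 - H) * g x\<bar> = x powr (1/2 - H) * \<bar>g x\<bar>" by (simp add: abs_mult)
      also have "\<dots> \<le> x powr (1/2 - H) * Bn H n" by (rule mult_left_mono) (use gb[of x] x True in auto)
      finally show "\<bar>x powr (1/2 - H) * g x\<bar> \<le> Bn H n * x powr (1/2 - H)" by (simp add: mult.commute)
    qed (use B0 in auto)
    thus ?thesis using True by (simp add: eH_def zero_ereal_def[symmetric] one_ereal_def[symmetric])
  next
    case False
    hence i2: "real i \<ge> 2" using i by simp
    have "\<bar>LBINT x=real i - 1..real i. x powr (1/2 - H) * g x\<bar> \<le> ((real i - 1) powr (1/2 - H) * Bn H n) * (real i - (real i - 1))"
    proof (rule LBINT_abs_le_const)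
      fix x :: real assume x: "x \<in> {real i - 1..real i}"
      have "\<bar>x powr (1/2 - H) * g x\<bar> = x powr (1/2 - H) * \<bar>g x\<bar>" by (simp add: abs_mult)
      also have "\<dots> \<le> (real i - 1) powr (1/2 - H) * Bn H n"
      proof (rule mult_mono)
        show "x powr (1/2 - H) \<le> (real i - 1) powr (1/2 - H)"
          by (rule powr_mono2') (use x i2 H in auto)
      qed (use gb[of x] x i2 in auto)
      finally show "\<bar>x powr (1/2 - H) * g x\<bar> \<le> (real i - 1) powr (1/2 - H) * Bn H n" .
    qed simp
    thus ?thesis using False by (simp add: eH_def mult.commute)
  qed
  hence "\<bar>\<sigma> * C_H H\<bar> * \<bar>LBINT x=real i - 1..real i. x powr (1/2 - H) * g x\<bar> \<le> \<bar>\<sigma> * C_H H\<bar> * (Bn H n * eH H i)"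
    by (rule mult_left_mono) simp
  thus ?thesis using J by (simp add: abs_mult mult_ac)
qed


lemma sum_bound:
  assumes H: "1/2 < H" "H < 1" and n: "n \<ge> 2"
  shows "(\<Sum>i=1..i_seq H n - 1. (jnH \<sigma> H n i)\<^sup>2)
     \<le> (\<sigma> * C_H H)\<^sup>2 * (Bn H n)\<^sup>2 * ((eH H 1)\<^sup>2 + real n powr (2 - 2*H) / (2 - 2*H))"
proof -
  define m where "m = i_seq H n - 1"
  define g where "g = 2 - 2*H"
  have g: "0 < g" "g < 1" using H by (auto simp: g_def)
  have xb: "x_seq H n \<le> 2/3 * (real n - 1)" by (rule x_seq_bound[OF H n])
  have ib: "real i \<le> 2/3 * (real n - 1)" if "i \<in> {1..m}" for i
    using i_le_x[of i H n] that xb by (simp add: m_def)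
  have "(\<Sum>i=1..m. (jnH \<sigma> H n i)\<^sup>2) \<le> (\<Sum>i=1..m. (\<sigma> * C_H H)\<^sup>2 * (Bn H n)\<^sup>2 * (eH H i)\<^sup>2)"
  proof (rule sum_mono)
    fix i assume i: "i \<in> {1..m}"
    have "\<bar>jnH \<sigma> H n i\<bar> \<le> \<bar>\<sigma> * C_H H\<bar> * Bn H n * eH H i"
      by (rule j_bound[OF H n]) (use i ib in auto)
    hence "\<bar>jnH \<sigma> H n i\<bar>\<^sup>2 \<le> (\<bar>\<sigma> * C_H H\<bar> * Bn H n * eH H i)\<^sup>2"
      by (rule power_mono) simp
    thus "(jnH \<sigma> H n i)\<^sup>2 \<le> (\<sigma> * C_H H)\<^sup>2 * (Bn H n)\<^sup>2 * (eH H i)\<^sup>2"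
      by (simp add: power_mult_distrib)
  qed
  also have "\<dots> = (\<sigma> * C_H H)\<^sup>2 * (Bn H n)\<^sup>2 * (\<Sum>i=1..m. (eH H i)\<^sup>2)"
    by (simp add: sum_distrib_left)
  also have "\<dots> \<le> (\<sigma> * C_H H)\<^sup>2 * (Bn H n)\<^sup>2 * ((eH H 1)\<^sup>2 + real n powr g / g)"
  proof (rule mult_left_mono)
    have "(\<Sum>i=1..m. (eH H i)\<^sup>2) \<le> (\<Sum>i\<in>insert 1 {2..m}. (eH H i)\<^sup>2)"
      by (rule sum_mono2) auto
    also have "\<dots> = (eH H 1)\<^sup>2 + (\<Sum>i\<in>{2..m}. (eH H i)\<^sup>2)" by simp
    also have "(\<Sum>i\<in>{2..m}. (eH H i)\<^sup>2) = (\<Sum>i\<in>{2..(m-1)+1}. (real i - 1) powr (g - 1))"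
    proof -
      have "{2..m} = {2..(m-1)+1}" by (cases m) auto
      moreover have "(eH H i)\<^sup>2 = (real i - 1) powr (g - 1)" if "i \<in> {2..m}" for i
      proof -
        have "(eH H i)\<^sup>2 = (real i - 1) powr (1/2 - H) * (real i - 1) powr (1/2 - H)"
          using that by (simp add: eH_def power2_eq_square)
        also have "\<dots> = (real i - 1) powr ((1/2 - H) + (1/2 - H))" by (simp only: powr_add)
        also have "(1/2 - H) + (1/2 - H) = g - 1" by (simp add: g_def)
        finally show ?thesis .
      qed
      ultimately show ?thesis by (intro sum.cong) auto
    qed
    also have "\<dots> \<le> real (m - 1) powr g / g" by (rule sum_powr_bound[OF g])
    also have "\<dots> \<le> real n powr g / g"
    proof -
      have "real (m - 1) \<le> real n"
      proof (cases "m = 0")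
        case False
        hence "real m \<le> 2/3 * (real n - 1)" using ib[of m] by auto
        thus ?thesis by simp
      qed simp
      hence "real (m - 1) powr g \<le> real n powr g" by (intro powr_mono2) (use g in auto)
      thus ?thesis using g by (simp add: divide_right_mono)
    qed
    finally show "(\<Sum>i=1..m. (eH H i)\<^sup>2) \<le> (eH H 1)\<^sup>2 + real n powr g / g" by simp
  qed simp
  finally show ?thesis by (simp add: m_def g_def)
qed

lemma bound_lim:
  assumes H: "1/2 < H" "H < 1"
  shows "(\<lambda>n. K * (6 powr (3/2 - H) * real n powr (2*H - 2))\<^sup>2 * (D + real n powr (2 - 2*H) / (2 - 2*H))) \<longlonglongrightarrow> 0"
proof -
  have l1: "(\<lambda>n. real n powr (2*H - 2)) \<longlonglongrightarrow> 0"
    by (rule tendsto_neg_powr) (use H in \<open>auto intro: filterlim_real_sequentially\<close>)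
  have l2: "(\<lambda>n. (real n powr (2*H - 2))\<^sup>2 * real n powr (2 - 2*H)) \<longlonglongrightarrow> 0"
  proof (rule Lim_transform_eventually[OF l1])
    show "\<forall>\<^sub>F n in sequentially. real n powr (2*H - 2) = (real n powr (2*H - 2))\<^sup>2 * real n powr (2 - 2*H)"
    proof (rule eventually_sequentiallyI[of 1])
      fix n :: nat assume "n \<ge> 1"
      have "(real n powr (2*H - 2))\<^sup>2 * real n powr (2 - 2*H) = real n powr ((2*H-2) + (2*H-2) + (2-2*H))"
        by (simp only: powr_add power2_eq_square)
      also have "(2*H-2) + (2*H-2) + (2-2*H) = 2*H - 2" by simp
      finally show "real n powr (2*H - 2) = (real n powr (2*H - 2))\<^sup>2 * real n powr (2 - 2*H)" by simp
    qed
  qed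
  have "(\<lambda>n. K * (6 powr (3/2 - H))\<^sup>2 * ((real n powr (2*H - 2))\<^sup>2 * D + ((real n powr (2*H - 2))\<^sup>2 * real n powr (2 - 2*H)) / (2 - 2*H))) \<longlonglongrightarrow> K * (6 powr (3/2 - H))\<^sup>2 * (0\<^sup>2 * D + 0 / (2 - 2*H))"
    by (intro tendsto_intros l1 l2) (use H in auto)
  thus ?thesis by (simp add: power_mult_distrib algebra_simps)
qed


theorem proposition5p1:
  fixes M :: "'a measure" and \<xi> :: "nat \<Rightarrow> 'a \<Rightarrow> real" and H \<sigma> :: real
  assumes "prob_space M"
    and "1/2 < H" and "H < 1" and "\<sigma> > 0"
    and "prob_space.indep_vars M (\<lambda>_. borel) \<xi> {1..}"
    and "\<And>i. i \<ge> 1 \<Longrightarrow> \<xi> i \<in> borel_measurable M"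
    and "\<And>i. i \<ge> 1 \<Longrightarrow> \<P>(\<omega> in M. \<xi> i \<omega> = 1) = 1/2"
    and "\<And>i. i \<ge> 1 \<Longrightarrow> \<P>(\<omega> in M. \<xi> i \<omega> = -1) = 1/2"
  shows "(\<lambda>n. prob_space.expectation M (\<lambda>\<omega>. (Ybar \<sigma> H \<xi> n \<omega> - 0)\<^sup>2)) \<longlonglongrightarrow> 0"
proof -
  have E: "prob_space.expectation M (\<lambda>\<omega>. (Ybar \<sigma> H \<xi> n \<omega> - 0)\<^sup>2) = (\<Sum>i=1..i_seq H n - 1. (jnH \<sigma> H n i)\<^sup>2)" for n
    unfolding Ybar_def using prob_space.expect_sq_sum[OF assms(1) assms(5-8)] by simp
  define U where "U n = (\<sigma> * C_H H)\<^sup>2 * (6 powr (3/2 - H) * real n powr (2*H - 2))\<^sup>2 * ((eH H 1)\<^sup>2 + real n powr (2 - 2*H) / (2 - 2*H))" for n :: nat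
  show ?thesis
  proof (rule tendsto_sandwich[of "\<lambda>n. 0" _ _ U])
    show "\<forall>\<^sub>F n in sequentially. 0 \<le> prob_space.expectation M (\<lambda>\<omega>. (Ybar \<sigma> H \<xi> n \<omega> - 0)\<^sup>2)"
      unfolding E by (intro always_eventually allI sum_nonneg) auto
    show "\<forall>\<^sub>F n in sequentially. prob_space.expectation M (\<lambda>\<omega>. (Ybar \<sigma> H \<xi> n \<omega> - 0)\<^sup>2) \<le> U n"
    proof (rule eventually_sequentiallyI[of 2])
      fix n :: nat assume "n \<ge> 2"
      from sum_bound[OF assms(2,3) this, of \<sigma>]
      show "prob_space.expectation M (\<lambda>\<omega>. (Ybar \<sigma> H \<xi> n \<omega> - 0)\<^sup>2) \<le> U n"
        unfolding E U_def Bn_def .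
    qed
    show "(\<lambda>n. 0) \<longlonglongrightarrow> 0" by simp
    show "U \<longlonglongrightarrow> 0" unfolding U_def by (rule bound_lim[OF assms(2,3)])
  qed
qed

end
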